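(* Every quantum graph $G$ has a code of dimension at least $\lceil |G|/(\|G\|+1)^2\rceil$.
   Context: A quantum graph $G$ consists of a finite-dimensional complex inner product space $V(G)$ and a real vector space $E(G)$ of self-adjoint operators on $V(G)$ containing the identity $I$; write $|G|=\dim V(G)$ and $\|G\|=\dim E(G)-1$. A code of $G$ is a subspace $C\subseteq V(G)$ such that there is a function $\epsilon_C:E(G)\to\mathbb{R}$ with $P_CAP_C=\epsilon_C(A)P_C$ for all $A\in E(G)$, where $P_C$ is the orthogonal projection onto $C$. *)

theory Defs
  imports "HOL-Analysis.Analysis"
begin

text \<open>V(G) is modelled as the standard complex inner product space complex^'n
  (every finite-dimensional complex inner product space is isometric to one of these);
  operators on V(G) are matrices complex^'n^'n.\<close>

definition cinner :: "complex ^ 'n \<Rightarrow> complex ^ 'n \<Rightarrow> complex" where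
  "cinner x y = (\<Sum>i\<in>UNIV. cnj (x $ i) * y $ i)"

definition adjoint_mat :: "complex ^ 'n ^ 'n \<Rightarrow> complex ^ 'n ^ 'n" where
  "adjoint_mat A = (\<chi> i j. cnj (A $ j $ i))"

definition self_adjoint :: "complex ^ 'n ^ 'n \<Rightarrow> bool" where
  "self_adjoint A \<longleftrightarrow> adjoint_mat A = A"

definition csubspace :: "(complex ^ 'n) set \<Rightarrow> bool" where
  "csubspace C \<longleftrightarrow> 0 \<in> C \<and> (\<forall>x\<in>C. \<forall>y\<in>C. x + y \<in> C) \<and> (\<forall>c. \<forall>x\<in>C. c *s x \<in> C)"

definition cspan :: "(complex ^ 'n) set \<Rightarrow> (complex ^ 'n) set" where
  "cspan S = {x. \<exists>T c. finite T \<and> T \<subseteq> S \<and> x = (\<Sum>v\<in>T. c v *s v)}"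

definition cdim :: "(complex ^ 'n) set \<Rightarrow> nat" where
  "cdim C = (LEAST k. \<exists>B. finite B \<and> card B = k \<and> cspan B = C)"

definition is_orth_proj :: "(complex ^ 'n) set \<Rightarrow> complex ^ 'n ^ 'n \<Rightarrow> bool" where
  "is_orth_proj C P \<longleftrightarrow> (\<forall>x. P *v x \<in> C \<and> (\<forall>y\<in>C. cinner y (x - P *v x) = 0))"

definition orth_proj :: "(complex ^ 'n) set \<Rightarrow> complex ^ 'n ^ 'n" where
  "orth_proj C = (THE P. is_orth_proj C P)"

text \<open>A quantum graph on V = complex^'n: a real subspace E of self-adjoint operators containing I.
  |G| = CARD('n), ||G|| = dim E - 1 (dim = real dimension).\<close>

definition quantum_graph :: "(complex ^ 'n ^ 'n) set \<Rightarrow> bool" where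
  "quantum_graph E \<longleftrightarrow> subspace E \<and> (\<forall>A\<in>E. self_adjoint A) \<and> mat 1 \<in> E"

definition is_code :: "(complex ^ 'n ^ 'n) set \<Rightarrow> (complex ^ 'n) set \<Rightarrow> bool" where
  "is_code E C \<longleftrightarrow> csubspace C \<and>
     (\<exists>\<epsilon> :: complex ^ 'n ^ 'n \<Rightarrow> real. \<forall>A\<in>E.
        orth_proj C ** A ** orth_proj C = \<epsilon> A *\<^sub>R orth_proj C)"

end

theory Submission
  imports Defs
begin


lemma cvx_indexed:
  fixes c :: "'i \<Rightarrow> 'a::real_vector"
  assumes fin: "finite I" and y: "y \<in> convex hull (c ` I)"
  shows "\<exists>\<mu>. (\<forall>i\<in>I. 0 \<le> \<mu> i) \<and> sum \<mu> I = 1 \<and> (\<Sum>i\<in>I. \<mu> i *\<^sub>R c i) = y"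
proof -
  obtain u where u: "\<forall>x\<in>c`I. 0 \<le> u x" "sum u (c`I) = 1" "(\<Sum>x\<in>c`I. u x *\<^sub>R x) = y"
    using y convex_hull_finite[of "c ` I"] fin by auto
  define m where "m i = u (c i) / card {j\<in>I. c j = c i}" for i
  have cpos: "card {j\<in>I. c j = x} > 0" if "x \<in> c ` I" for x
    using that fin by (auto simp: card_gt_0_iff)
  have k1: "(\<Sum>i\<in>{j\<in>I. c j = x}. m i) = u x" if "x \<in> c ` I" for x
  proof -
    have "(\<Sum>i\<in>{j\<in>I. c j = x}. m i) = (\<Sum>i\<in>{j\<in>I. c j = x}. u x / card {j\<in>I. c j = x})"
      by (rule sum.cong) (auto simp: m_def)
    also have "\<dots> = u x" using cpos[OF that] by simp
    finally show ?thesis .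
  qed
  have k2: "(\<Sum>i\<in>{j\<in>I. c j = x}. m i *\<^sub>R c i) = u x *\<^sub>R x" if "x \<in> c ` I" for x
  proof -
    have "(\<Sum>i\<in>{j\<in>I. c j = x}. m i *\<^sub>R c i) = (\<Sum>i\<in>{j\<in>I. c j = x}. m i) *\<^sub>R x"
      by (simp add: scaleR_left.sum)
    then show ?thesis using k1[OF that] by simp
  qed
  have "sum m I = (\<Sum>x\<in>c`I. \<Sum>i\<in>{j\<in>I. c j = x}. m i)"
    by (rule sum.image_gen[OF fin])
  also have "\<dots> = sum u (c`I)" by (rule sum.cong) (auto simp: k1)
  finally have s1: "sum m I = 1" using u by simp
  have "(\<Sum>i\<in>I. m i *\<^sub>R c i) = (\<Sum>x\<in>c`I. \<Sum>i\<in>{j\<in>I. c j = x}. m i *\<^sub>R c i)"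
    by (rule sum.image_gen[OF fin])
  also have "\<dots> = (\<Sum>x\<in>c`I. u x *\<^sub>R x)" by (rule sum.cong[OF refl], rule k2)
  finally have s2: "(\<Sum>i\<in>I. m i *\<^sub>R c i) = y" using u by simp
  have "\<forall>i\<in>I. 0 \<le> m i" using u(1) by (auto simp: m_def)
  with s1 s2 show ?thesis by blast
qed

lemma colorful_cara:
  fixes C :: "nat \<Rightarrow> 'a::euclidean_space set"
  assumes S: "subspace S" and fin: "\<And>i. i<r \<Longrightarrow> finite (C i)"
    and sub: "\<And>i. i<r \<Longrightarrow> C i \<subseteq> S" and z: "\<And>i. i<r \<Longrightarrow> 0 \<in> convex hull (C i)"
    and dimS: "dim S < r"
  shows "\<exists>c. (\<forall>i<r. c i \<in> C i) \<and> 0 \<in> convex hull (c ` {..<r})"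
proof -
  define T where "T = PiE {..<r} C"
  have finT: "finite T" unfolding T_def using fin by (intro finite_PiE) auto
  have ne: "C i \<noteq> {}" if "i < r" for i using z[OF that] by auto
  have Tne: "T \<noteq> {}" unfolding T_def using ne by (auto simp: PiE_eq_empty_iff)
  define f where "f c = infdist 0 (convex hull (c ` {..<r}))" for c :: "nat \<Rightarrow> 'a"
  obtain c where cT: "c \<in> T" and cmin: "\<And>c'. c' \<in> T \<Longrightarrow> f c \<le> f c'"
  proof -
    have "Min (f ` T) \<in> f ` T" using finT Tne by auto
    then obtain c where "c \<in> T" "f c = Min (f ` T)" by auto
    moreover have "\<And>c'. c' \<in> T \<Longrightarrow> Min (f ` T) \<le> f c'" using finT by auto
    ultimately show ?thesis using that by metis
  qed
  have r0: "r > 0" using dimS by simp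
  define K where "K = convex hull (c ` {..<r})"
  have Kc: "compact K" unfolding K_def by (intro compact_convex_hull finite_imp_compact) auto
  have Kne: "K \<noteq> {}" unfolding K_def using r0 by auto
  obtain x where xK: "x \<in> K" and fx: "f c = dist 0 x"
    using infdist_attains_inf[OF compact_imp_closed[OF Kc] Kne, of 0] unfolding f_def K_def by metis
  have xmin: "dist 0 x \<le> dist 0 y" if "y \<in> K" for y
    using infdist_le[OF that, of 0] fx unfolding f_def K_def by simp
  have cC: "\<forall>i<r. c i \<in> C i" using cT unfolding T_def by auto
  show ?thesis
  proof (cases "x = 0")
    case True
    then show ?thesis using cC xK unfolding K_def by blast
  next
    case False
    then have xx: "inner x x > 0" by simp
    have hK: "inner x y \<ge> inner x x" if "y \<in> K" for y
    proof -
      have "inner (0 - x) (y - x) \<le> 0"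
        by (rule any_closest_point_dot[OF _ compact_imp_closed[OF Kc] xK that])
          (use xmin in \<open>auto simp: K_def\<close>)
      then show ?thesis by (simp add: inner_diff_right)
    qed
    define J where "J = {i\<in>{..<r}. inner x (c i) = inner x x}"
    obtain \<mu> where mu: "\<forall>i\<in>{..<r}. 0 \<le> \<mu> i" "sum \<mu> {..<r} = 1" "(\<Sum>i\<in>{..<r}. \<mu> i *\<^sub>R c i) = x"
      using cvx_indexed[of "{..<r}" x c] xK unfolding K_def by auto
    have ci: "c i \<in> K" if "i < r" for i using that unfolding K_def by (auto intro: hull_inc)
    have e1: "(\<Sum>i\<in>{..<r}. \<mu> i * inner x (c i)) = inner x x"
    proof -
      have "inner x x = inner x (\<Sum>i\<in>{..<r}. \<mu> i *\<^sub>R c i)" using mu(3) by simp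
      also have "\<dots> = (\<Sum>i\<in>{..<r}. \<mu> i * inner x (c i))" by (simp add: inner_sum_right)
      finally show ?thesis by simp
    qed
    have "(\<Sum>i\<in>{..<r}. \<mu> i * (inner x (c i) - inner x x)) = inner x x - inner x x"
    proof -
      have "(\<Sum>i\<in>{..<r}. \<mu> i * (inner x (c i) - inner x x))
          = (\<Sum>i\<in>{..<r}. \<mu> i * inner x (c i)) - (\<Sum>i\<in>{..<r}. \<mu> i * inner x x)"
        by (simp only: right_diff_distrib sum_subtractf)
      also have "(\<Sum>i\<in>{..<r}. \<mu> i * inner x x) = sum \<mu> {..<r} * inner x x"
        by (simp only: sum_distrib_right)
      finally show ?thesis using mu(2) e1 by simp
    qed
    then have "(\<Sum>i\<in>{..<r}. \<mu> i * (inner x (c i) - inner x x)) = 0" by simp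
    moreover have nn: "\<And>i. i \<in> {..<r} \<Longrightarrow> 0 \<le> \<mu> i * (inner x (c i) - inner x x)"
    proof -
      fix i assume "i \<in> {..<r}"
      then show "0 \<le> \<mu> i * (inner x (c i) - inner x x)"
        using mu(1) hK[OF ci[of i]] by simp
    qed
    ultimately have "\<forall>i\<in>{..<r}. \<mu> i * (inner x (c i) - inner x x) = 0"
      using sum_nonneg_eq_0_iff[OF finite_lessThan nn] by simp
    then have mu0: "\<mu> i = 0" if "i < r" "i \<notin> J" for i using that unfolding J_def by auto
    have JI: "J \<subseteq> {..<r}" by (auto simp: J_def)
    have "sum \<mu> {..<r} = sum \<mu> J"
      by (rule sum.mono_neutral_right[OF finite_lessThan JI]) (use mu0 in blast)
    then have "sum \<mu> J = 1" using mu(2) by simp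
    moreover have "(\<Sum>i\<in>{..<r}. \<mu> i *\<^sub>R c i) = (\<Sum>i\<in>J. \<mu> i *\<^sub>R c i)"
      by (rule sum.mono_neutral_right[OF finite_lessThan JI]) (use mu0 in simp)
    then have "(\<Sum>i\<in>J. \<mu> i *\<^sub>R c i) = x" using mu(3) by simp
    ultimately have xP: "x \<in> convex hull (c ` J)"
    proof -
      have fJ: "finite J" using JI finite_subset by blast
      show ?thesis
        using convex_sum[OF fJ convex_convex_hull, of \<mu> c "c ` J"] \<open>sum \<mu> J = 1\<close>
          \<open>(\<Sum>i\<in>J. \<mu> i *\<^sub>R c i) = x\<close> mu(1) JI
        by (auto intro: hull_inc)
    qed
    define P where "P = c ` J"
    obtain F where F: "finite F" "F \<subseteq> P" "card F \<le> aff_dim P + 1" "x \<in> convex hull F"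
      using xP caratheodory_aff_dim[of P] unfolding P_def by auto
    have PH: "P \<subseteq> {y. inner x y = inner x x}" unfolding P_def J_def by auto
    have "affine hull P \<subseteq> {y. inner x y = inner x x}"
      by (rule hull_minimal[OF PH]) (simp add: affine_hyperplane)
    then have n0: "0 \<notin> affine hull P" using xx by auto
    have "aff_dim (insert 0 P) = aff_dim P + 1" using aff_dim_insert[of 0 P] n0 by simp
    moreover have "aff_dim (insert 0 P) = int (dim (insert 0 P))"
      using aff_dim_eq_dim[of 0 "insert 0 P"] by (simp add: hull_inc)
    moreover have "dim (insert 0 P) \<le> dim S"
      apply (rule dim_subset) unfolding P_def J_def using cC sub S subspace_0 by blast
    ultimately have cardF: "card F < r" using F(3) dimS by linarith
    have FI: "F \<subseteq> c ` {..<r}" using F(2) unfolding P_def J_def by auto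
    define g where "g y = (SOME i. i < r \<and> c i = y)" for y
    have g: "g y < r \<and> c (g y) = y" if "y \<in> F" for y
      unfolding g_def by (rule someI_ex) (use FI that in auto)
    have "card (g ` F) < card {..<r}" using card_image_le[OF F(1), of g] cardF by simp
    have "\<not> {..<r} \<subseteq> g ` F"
    proof
      assume "{..<r} \<subseteq> g ` F"
      then have "card {..<r} \<le> card (g ` F)" by (rule card_mono[OF finite_imageI[OF F(1)]])
      then show False using \<open>card (g ` F) < card {..<r}\<close> by simp
    qed
    then obtain i0 where i0: "i0 < r" "i0 \<notin> g ` F" by auto
    have Fi0: "F \<subseteq> c ` ({..<r} - {i0})"
    proof
      fix y assume "y \<in> F"
      then show "y \<in> c ` ({..<r} - {i0})" using g[of y] i0
        by (metis Diff_iff image_eqI lessThan_iff singletonD)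
    qed
    obtain zz where zz: "zz \<in> C i0" "inner x zz \<le> 0"
    proof (rule ccontr)
      assume "\<not> thesis"
      then have "C i0 \<subseteq> {y. inner x y > 0}" using that by force
      then have "convex hull (C i0) \<subseteq> {y. inner x y > 0}"
        by (rule hull_minimal) (rule convex_halfspace_gt)
      then show False using z[OF i0(1)] by auto
    qed
    define c' where "c' = c(i0 := zz)"
    have c'T: "c' \<in> T" using cT zz(1) i0(1) unfolding T_def c'_def by (auto simp: PiE_iff extensional_def)
    define K' where "K' = convex hull (c' ` {..<r})"
    have "c ` ({..<r} - {i0}) \<subseteq> c' ` {..<r}" unfolding c'_def by auto
    then have "F \<subseteq> K'" using Fi0 unfolding K'_def by (meson hull_subset order_trans)
    then have xK': "x \<in> K'" using F(4) unfolding K'_def by (metis convex_convex_hull hull_minimal subsetD)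
    have zK': "zz \<in> K'" unfolding K'_def c'_def using i0 by (force intro: hull_inc)
    have "inner (0 - x) (zz - x) = inner x x - inner x zz"
      by (simp add: inner_diff_right inner_diff_left inner_commute)
    then have "inner (0 - x) (zz - x) > 0" using zz(2) xx by linarith
    then obtain u where u: "u > 0" "u \<le> 1" "dist (x + u *\<^sub>R (zz - x)) 0 < dist x 0"
      using closer_point_lemma by blast
    have "x + u *\<^sub>R (zz - x) \<in> K'"
    proof -
      have "x + u *\<^sub>R (zz - x) = (1 - u) *\<^sub>R x + u *\<^sub>R zz" by (simp add: algebra_simps)
      then show ?thesis using convexD[OF convex_convex_hull, of x "c' ` {..<r}" zz "1-u" u] xK' zK' u
        unfolding K'_def by auto
    qed
    then have "f c' \<le> dist 0 (x + u *\<^sub>R (zz - x))" unfolding f_def K'_def by (rule infdist_le)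
    also have "\<dots> < dist 0 x" using u(3) by (simp add: dist_commute)
    also have "\<dots> = f c" using fx by simp
    finally show ?thesis using cmin[OF c'T] by simp
  qed
qed



lemma idx_inj:
  fixes l l0 q q0 d :: nat
  assumes "l < d" "l0 < d"
  shows "(l + d*q = l0 + d*q0) \<longleftrightarrow> (l = l0 \<and> q = q0)"
proof
  assume h: "l + d*q = l0 + d*q0"
  have "(l + d*q) mod d = l" "(l + d*q) div d = q" using assms by auto
  moreover have "(l0 + d*q0) mod d = l0" "(l0 + d*q0) div d = q0" using assms by auto
  ultimately show "l = l0 \<and> q = q0" using h by metis
qed auto

lemma mult_ind: "x * (if P then 1 else 0) = (if P then x else (0::real))" by simp

lemma coord_extract:
  fixes emb :: "nat \<Rightarrow> 'i::finite" and \<alpha> :: "nat \<Rightarrow> nat \<Rightarrow> real"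
  assumes emb: "inj_on emb {..<d*K}" and l0: "l0 < d" and q0: "q0 < K"
  shows "(\<Sum>l<d. \<Sum>q<K. \<alpha> l q *\<^sub>R (axis (emb (l + d*q)) 1 :: real^'i)) $ emb (l0 + d*q0) = \<alpha> l0 q0"
proof -
  have lt: "l + d*q < d*K" if "l < d" "q < K" for l q
  proof -
    have "l + d*q < d + d*q" using that by simp
    also have "\<dots> = d * Suc q" by simp
    also have "\<dots> \<le> d*K" using that by (intro mult_le_mono2) simp
    finally show ?thesis .
  qed
  have e: "(axis (emb (l + d*q)) 1 :: real^'i) $ emb (l0 + d*q0) = (if l = l0 \<and> q = q0 then 1 else 0)"
    if "l < d" "q < K" for l q
  proof -
    have "emb (l + d*q) = emb (l0 + d*q0) \<longleftrightarrow> l + d*q = l0 + d*q0"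
      using inj_onD[OF emb] lt[OF that] lt[OF l0 q0] by auto
    also have "\<dots> \<longleftrightarrow> l = l0 \<and> q = q0" using idx_inj[OF that(1) l0] by simp
    finally show ?thesis by (auto simp: axis_def)
  qed
  have "(\<Sum>l<d. \<Sum>q<K. \<alpha> l q *\<^sub>R (axis (emb (l + d*q)) 1 :: real^'i)) $ emb (l0 + d*q0)
      = (\<Sum>l<d. \<Sum>q<K. \<alpha> l q * (if l = l0 \<and> q = q0 then 1 else 0))"
    by (simp add: e)
  also have "\<dots> = (\<Sum>l<d. if l = l0 then (\<Sum>q<K. if q = q0 then \<alpha> l q else 0) else 0)"
    by (rule sum.cong[OF refl]) (auto intro!: sum.cong simp: mult_ind)
  also have "\<dots> = \<alpha> l0 q0" using l0 q0 by simp
  finally show ?thesis .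
qed

lemma tverberg:
  fixes a :: "nat \<Rightarrow> nat \<Rightarrow> real" and \<gamma> :: "nat \<Rightarrow> real" and emb :: "nat \<Rightarrow> 'i::finite"
  assumes k: "1 \<le> k" and r: "r = (k-1)*d + 1"
    and gam: "\<And>j. j < r \<Longrightarrow> (\<Sum>l<d. \<gamma> l * a j l) = 1"
    and emb: "inj_on emb {..<d*(k-1)}"
  shows "\<exists>p \<nu>. (\<forall>j<r. p j < k \<and> 0 \<le> \<nu> j) \<and> (\<forall>q<k. (\<Sum>j\<in>{j\<in>{..<r}. p j = q}. \<nu> j) = 1) \<and>
        (\<forall>q<k. \<forall>l<d. (\<Sum>j\<in>{j\<in>{..<r}. p j = q}. \<nu> j * a j l) = (\<Sum>j\<in>{j\<in>{..<r}. p j = 0}. \<nu> j * a j l))"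
proof -
  define K where "K = k - 1"
  have kK: "k = Suc K" using k K_def by simp
  have embK: "inj_on emb {..<d*K}" using emb K_def by simp
  define U where "U p q = (if p = q then 1 else if p = K then -1 else (0::real))" for p q :: nat
  define e where "e t = (axis (emb t) 1 :: real^'i)" for t
  define L where "L j p = (\<Sum>l<d. \<Sum>q<K. (a j l * U p q) *\<^sub>R e (l + d*q))" for j p
  define C where "C j = L j ` {..<k}" for j
  define S where "S = span (e ` {..<d*K})"
  have lt: "l + d*q < d*K" if "l < d" "q < K" for l q
  proof -
    have "l + d*q < d + d*q" using that by simp
    also have "\<dots> = d * Suc q" by simp
    also have "\<dots> \<le> d*K" using that by (intro mult_le_mono2) simp
    finally show ?thesis .
  qed
  have LS: "L j p \<in> S" for j p
    unfolding L_def S_def by (intro span_sum span_scale span_base) (auto simp: lt)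
  have Usum: "(\<Sum>p<k. U p q) = 0" if "q < K" for q
  proof -
    have "(\<Sum>p<k. U p q) = (\<Sum>p<K. U p q) + U K q" using kK by simp
    also have "(\<Sum>p<K. U p q) = (\<Sum>p<K. if p = q then 1 else 0)" by (rule sum.cong) (auto simp: U_def)
    also have "\<dots> = 1" using that by simp
    also have "U K q = -1" using that by (simp add: U_def)
    finally show ?thesis by simp
  qed
  have Lsum: "(\<Sum>p<k. L j p) = 0" for j
  proof -
    have "(\<Sum>p<k. L j p) = (\<Sum>l<d. \<Sum>p<k. \<Sum>q<K. (a j l * U p q) *\<^sub>R e (l+d*q))"
      unfolding L_def by (rule sum.swap)
    also have "\<dots> = (\<Sum>l<d. \<Sum>q<K. \<Sum>p<k. (a j l * U p q) *\<^sub>R e (l+d*q))"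
      by (rule sum.cong[OF refl], rule sum.swap)
    also have "\<dots> = (\<Sum>l<d. \<Sum>q<K. (a j l * (\<Sum>p<k. U p q)) *\<^sub>R e (l+d*q))"
      by (simp add: sum_distrib_left scaleR_left.sum)
    also have "\<dots> = 0" by (simp add: Usum)
    finally show ?thesis .
  qed
  have C0: "0 \<in> convex hull (C j)" for j
  proof -
    have "(\<Sum>p<k. (1/real k) *\<^sub>R L j p) \<in> convex hull (C j)"
      by (rule convex_sum[OF finite_lessThan convex_convex_hull]) (use k in \<open>auto simp: C_def intro: hull_inc\<close>)
    moreover have "(\<Sum>p<k. (1/real k) *\<^sub>R L j p) = 0" by (simp add: Lsum flip: scaleR_right.sum)
    ultimately show ?thesis by simp
  qed
  have dimS: "dim S < r"
  proof -
    have "dim S \<le> card (e ` {..<d*K})" unfolding S_def by (rule dim_le_card) auto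
    also have "\<dots> \<le> d*K" using card_image_le[of "{..<d*K}" e] by simp
    finally show ?thesis using r K_def by (simp add: mult.commute)
  qed
  obtain c where c: "\<forall>j<r. c j \<in> C j" "0 \<in> convex hull (c ` {..<r})"
    using colorful_cara[of S r C] LS C0 dimS unfolding S_def C_def by (auto simp: subspace_span)
  define p where "p j = (SOME p. p < k \<and> c j = L j p)" for j
  have p: "p j < k \<and> c j = L j (p j)" if "j < r" for j
    unfolding p_def by (rule someI_ex) (use c(1) that in \<open>auto simp: C_def\<close>)
  obtain \<mu> where mu: "\<forall>j\<in>{..<r}. 0 \<le> \<mu> j" "sum \<mu> {..<r} = 1" "(\<Sum>j\<in>{..<r}. \<mu> j *\<^sub>R c j) = 0"
    using cvx_indexed[of "{..<r}" 0 c] c(2) by auto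
  have cL: "(\<Sum>j<r. \<mu> j *\<^sub>R L j (p j)) = 0"
    using mu(3) by (metis (no_types, lifting) lessThan_iff p sum.cong)
  have coord: "(\<Sum>j<r. \<mu> j * (a j l * U (p j) q)) = 0" if "l<d" "q<K" for l q
  proof -
    have "(\<Sum>j<r. \<mu> j *\<^sub>R L j (p j)) = (\<Sum>j<r. \<Sum>l<d. \<Sum>q<K. (\<mu> j * (a j l * U (p j) q)) *\<^sub>R e (l + d*q))"
      unfolding L_def by (simp add: scaleR_right.sum)
    also have "\<dots> = (\<Sum>l<d. \<Sum>j<r. \<Sum>q<K. (\<mu> j * (a j l * U (p j) q)) *\<^sub>R e (l + d*q))"
      by (rule sum.swap)
    also have "\<dots> = (\<Sum>l<d. \<Sum>q<K. \<Sum>j<r. (\<mu> j * (a j l * U (p j) q)) *\<^sub>R e (l + d*q))"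
      by (rule sum.cong[OF refl], rule sum.swap)
    also have "\<dots> = (\<Sum>l<d. \<Sum>q<K. (\<Sum>j<r. \<mu> j * (a j l * U (p j) q)) *\<^sub>R e (l + d*q))"
      by (simp add: scaleR_left.sum)
    finally have "(\<Sum>l<d. \<Sum>q<K. (\<Sum>j<r. \<mu> j * (a j l * U (p j) q)) *\<^sub>R e (l + d*q)) = 0"
      using cL by simp
    then have "(\<Sum>l<d. \<Sum>q<K. (\<Sum>j<r. \<mu> j * (a j l * U (p j) q)) *\<^sub>R e (l + d*q)) $ emb (l + d*q) = 0"
      by simp
    then show ?thesis using coord_extract[OF embK that, of "\<lambda>l q. \<Sum>j<r. \<mu> j * (a j l * U (p j) q)"]
      unfolding e_def by simp
  qed
  define G where "G q = {j\<in>{..<r}. p j = q}" for q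
  have f1: "(\<Sum>j\<in>{j\<in>{..<r}. P j}. g j) = (\<Sum>j<r. if P j then g j else 0)" for P and g :: "nat \<Rightarrow> real"
    by (rule sum.inter_filter) simp
  define Y where "Y q l = (\<Sum>j\<in>G q. \<mu> j * a j l)" for q l
  have Yeq: "Y q l = Y K l" if "q < K" "l < d" for q l
  proof -
    have "\<mu> j * (a j l * U (p j) q) = (if p j = q then \<mu> j * a j l else 0) - (if p j = K then \<mu> j * a j l else 0)" for j
      using that by (auto simp: U_def)
    then have "0 = (\<Sum>j<r. (if p j = q then \<mu> j * a j l else 0) - (if p j = K then \<mu> j * a j l else 0))"
      using coord[OF that(2,1)] by simp
    also have "\<dots> = Y q l - Y K l"
      unfolding Y_def G_def f1 by (simp add: sum_subtractf)
    finally show ?thesis by simp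
  qed
  have Yall: "Y q l = Y K l" if "q < k" "l < d" for q l
    using Yeq[of q l] that kK by (cases "q = K") auto
  define W where "W q = sum \<mu> (G q)" for q
  have W: "W q = (\<Sum>l<d. \<gamma> l * Y q l)" for q
  proof -
    have "W q = (\<Sum>j\<in>G q. \<mu> j * (\<Sum>l<d. \<gamma> l * a j l))"
      unfolding W_def by (rule sum.cong) (auto simp: G_def gam)
    also have "\<dots> = (\<Sum>l<d. \<gamma> l * Y q l)"
      unfolding Y_def by (simp add: sum_distrib_left sum_distrib_right sum.swap[of _ "G q"] algebra_simps)
    finally show ?thesis .
  qed
  have Wall: "W q = W K" if "q < k" for q
    using W Yall that by simp
  have "sum \<mu> {..<r} = (\<Sum>j<r. \<Sum>q<k. if p j = q then \<mu> j else 0)"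
    by (rule sum.cong) (auto simp: p)
  also have "\<dots> = (\<Sum>q<k. \<Sum>j<r. if p j = q then \<mu> j else 0)" by (rule sum.swap)
  also have "\<dots> = (\<Sum>q<k. W q)" unfolding W_def G_def f1 by simp
  also have "\<dots> = (\<Sum>q<k. W K)" by (rule sum.cong) (auto simp: Wall)
  finally have WK: "real k * W K = 1" using mu(2) by simp
  define \<nu> where "\<nu> j = real k * \<mu> j" for j
  show ?thesis
  proof (intro exI conjI allI impI)
    fix j assume "j < r"
    then show "p j < k" "0 \<le> \<nu> j" using p mu(1) by (auto simp: \<nu>_def)
  next
    fix q assume "q < k"
    then show "(\<Sum>j\<in>{j\<in>{..<r}. p j = q}. \<nu> j) = 1"
      using Wall WK unfolding \<nu>_def W_def G_def by (simp add: sum_distrib_left[symmetric])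
  next
    fix q l assume "q < k" "l < d"
    then have "Y q l = Y 0 l" using Yall[of q l] Yall[of 0 l] k by simp
    then show "(\<Sum>j\<in>{j\<in>{..<r}. p j = q}. \<nu> j * a j l) = (\<Sum>j\<in>{j\<in>{..<r}. p j = 0}. \<nu> j * a j l)"
      unfolding Y_def G_def \<nu>_def by (simp add: mult.assoc flip: sum_distrib_left)
  qed
qed



lemma cinner_add_right: "cinner x (y + z) = cinner x y + cinner x z"
  by (simp add: cinner_def distrib_left sum.distrib)
lemma cinner_add_left: "cinner (x + y) z = cinner x z + cinner y z"
  by (simp add: cinner_def distrib_right sum.distrib)
lemma cinner_diff_right: "cinner x (y - z) = cinner x y - cinner x z"
  by (simp add: cinner_def right_diff_distrib sum_subtractf)
lemma cinner_diff_left: "cinner (x - y) z = cinner x z - cinner y z"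
  by (simp add: cinner_def left_diff_distrib sum_subtractf)
lemma cinner_smult_right: "cinner x (c *s y) = c * cinner x y"
  by (simp add: cinner_def sum_distrib_left algebra_simps)
lemma cinner_smult_left: "cinner (c *s x) y = cnj c * cinner x y"
  by (simp add: cinner_def sum_distrib_left algebra_simps)
lemma cinner_zero_right[simp]: "cinner x 0 = 0" by (simp add: cinner_def)
lemma cinner_zero_left[simp]: "cinner 0 x = 0" by (simp add: cinner_def)
lemma cinner_sum_right: "cinner x (\<Sum>i\<in>I. f i) = (\<Sum>i\<in>I. cinner x (f i))"
  by (induct I rule: infinite_finite_induct) (simp_all add: cinner_add_right)
lemma cinner_sum_left: "cinner (\<Sum>i\<in>I. f i) y = (\<Sum>i\<in>I. cinner (f i) y)"
  by (induct I rule: infinite_finite_induct) (simp_all add: cinner_add_left)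
lemma cinner_cnj: "cnj (cinner x y) = cinner y x"
  by (simp add: cinner_def mult.commute)

lemma cinner_self: "cinner x x = complex_of_real ((norm x)^2)"
proof -
  have "(norm x)^2 = (\<Sum>i\<in>UNIV. (norm (x$i))^2)"
    by (simp add: norm_vec_def L2_set_def sum_nonneg)
  then have "complex_of_real ((norm x)^2) = (\<Sum>i\<in>UNIV. complex_of_real ((norm (x$i))^2))" by simp
  also have "\<dots> = cinner x x" unfolding cinner_def
    by (rule sum.cong[OF refl]) (simp only: complex_norm_square mult.commute)
  finally show ?thesis by simp
qed

lemma cinner_self_eq0: "cinner x x = 0 \<Longrightarrow> x = 0"
  by (simp add: cinner_self)

lemma mv_smult: "A *v (c *s x) = c *s (A *v (x::complex^'n))"
  by (simp add: vec_eq_iff matrix_vector_mult_def sum_distrib_left algebra_simps)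
lemma mv_sum: "A *v (\<Sum>i\<in>I. f i) = (\<Sum>i\<in>I. A *v f i)"
  by (induct I rule: infinite_finite_induct) (simp_all add: matrix_vector_right_distrib)
lemma mv_scaleR_mat: "(r *\<^sub>R A) *v x = r *\<^sub>R (A *v (x::complex^'n))"
  by (simp add: vec_eq_iff matrix_vector_mult_def scaleR_sum_right)

lemma sa_move:
  assumes "self_adjoint A"
  shows "cinner x (A *v y) = cinner (A *v x) y"
proof -
  have A: "cnj (A $ j $ i) = A $ i $ j" for i j
    using assms unfolding self_adjoint_def adjoint_mat_def by (metis vec_lambda_beta)
  have "cinner x (A *v y) = (\<Sum>i\<in>UNIV. \<Sum>j\<in>UNIV. cnj (x$i) * (A$i$j * y$j))"
    by (simp add: cinner_def matrix_vector_mult_def sum_distrib_left)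
  also have "\<dots> = (\<Sum>j\<in>UNIV. \<Sum>i\<in>UNIV. cnj (x$i) * (A$i$j * y$j))" by (rule sum.swap)
  also have "\<dots> = (\<Sum>j\<in>UNIV. \<Sum>i\<in>UNIV. cnj (A$j$i) * cnj (x$i) * y$j)"
    by (simp add: A algebra_simps)
  also have "\<dots> = cinner (A *v x) y"
    by (simp add: cinner_def matrix_vector_mult_def sum_distrib_right)
  finally show ?thesis .
qed

lemma sa_cnj:
  assumes "self_adjoint A"
  shows "cnj (cinner x (A *v y)) = cinner y (A *v x)"
  using sa_move[OF assms] cinner_cnj by metis

lemma sa_real:
  assumes "self_adjoint A"
  shows "cinner x (A *v x) = complex_of_real (Re (cinner x (A *v x)))"
proof -
  have "cnj (cinner x (A *v x)) = cinner x (A *v x)" by (rule sa_cnj[OF assms])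
  then show ?thesis by (metis Reals_cnj_iff complex_is_Real_iff of_real_Re)
qed

lemma inner_Re: "inner x y = Re (cinner x (y::complex^'n))"
  by (simp add: inner_vec_def cinner_def inner_complex_def)
lemma inner_Im: "inner (\<i> *s x) y = Im (cinner x (y::complex^'n))"
  by (simp add: inner_vec_def cinner_def inner_complex_def algebra_simps)

lemma span_lin_zero:
  fixes f :: "'a::real_vector \<Rightarrow> 'b::real_vector"
  assumes add: "\<And>A B. f (A + B) = f A + f B" and sc: "\<And>r A. f (r *\<^sub>R A) = r *\<^sub>R f A"
    and S: "\<And>b. b \<in> S \<Longrightarrow> f b = 0" and A: "A \<in> span S"
  shows "f A = 0"
proof -
  have "linear f" by (rule linearI[OF add sc])
  have "subspace {A. f A = 0}"
    unfolding subspace_def using linear_0[OF \<open>linear f\<close>] add sc by auto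
  then show ?thesis using span_induct[OF A, of "\<lambda>A. f A = 0"] S by auto
qed



lemma exists_orth:
  fixes X :: "(complex^'n) set"
  assumes fX: "finite X" and cX: "card X < CARD('n)"
  shows "\<exists>w. cinner w w = 1 \<and> (\<forall>x\<in>X. cinner x w = 0)"
proof -
  define Y where "Y = X \<union> (\<lambda>x. \<i> *s x) ` X"
  have fY: "finite Y" using fX by (simp add: Y_def)
  have "card Y \<le> card X + card ((\<lambda>x. \<i> *s x) ` X)" unfolding Y_def by (rule card_Un_le)
  also have "\<dots> \<le> card X + card X" using card_image_le[OF fX] by simp
  finally have cY: "card Y \<le> 2 * card X" by simp
  have "dim Y \<le> card Y" by (rule dim_le_card[OF span_superset fY])
  then have "dim Y < DIM(complex^'n)" using cY cX by simp
  then obtain w0 where w0: "w0 \<noteq> 0" "\<And>y. y \<in> span Y \<Longrightarrow> orthogonal w0 y"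
    using orthogonal_to_subspace_exists by blast
  have o: "cinner x w0 = 0" if "x \<in> X" for x
  proof -
    have "orthogonal w0 x" "orthogonal w0 (\<i> *s x)"
      using w0(2) that by (auto simp: Y_def intro: span_base)
    then have "inner x w0 = 0" "inner (\<i> *s x) w0 = 0"
      by (auto simp: orthogonal_def inner_commute)
    then have "Re (cinner x w0) = 0" "Im (cinner x w0) = 0" using inner_Re[of x w0] inner_Im[of x w0] by simp_all
    then show ?thesis by (simp add: complex_eq_iff)
  qed
  define w where "w = complex_of_real (1 / norm w0) *s w0"
  have "cinner w w = complex_of_real (1 / norm w0) * complex_of_real (1 / norm w0) * complex_of_real ((norm w0)^2)"
    unfolding w_def cinner_smult_left cinner_smult_right cinner_self[of w0] by simp
  also have "\<dots> = 1" using w0(1) by (simp add: power2_eq_square flip: of_real_mult)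
  finally have "cinner w w = 1" .
  moreover have "\<forall>x\<in>X. cinner x w = 0" unfolding w_def by (simp add: cinner_smult_right o)
  ultimately show ?thesis by blast
qed

lemma greedy:
  fixes B :: "nat \<Rightarrow> complex^'n^'n"
  shows "d * j < CARD('n) + d \<Longrightarrow>
    \<exists>w. (\<forall>i<j. cinner (w i) (w i) = 1) \<and> (\<forall>i<j. \<forall>i'<i. \<forall>l<d. cinner (B l *v w i') (w i) = 0)"
proof (induct j)
  case 0 show ?case by auto
next
  case (Suc j)
  then have dj: "d * j < CARD('n)" by simp
  then obtain w where w: "\<forall>i<j. cinner (w i) (w i) = 1" "\<forall>i<j. \<forall>i'<i. \<forall>l<d. cinner (B l *v w i') (w i) = 0"
    using Suc(1) by fastforce
  define X where "X = (\<lambda>(l,i'). B l *v w i') ` ({..<d} \<times> {..<j})"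
  have fX: "finite X" unfolding X_def by simp
  have "card X \<le> card ({..<d} \<times> {..<j})" unfolding X_def by (rule card_image_le) simp
  then have "card X < CARD('n)" using dj by (simp add: card_cartesian_product)
  then obtain u where u: "cinner u u = 1" "\<forall>x\<in>X. cinner x u = 0" using exists_orth[OF fX] by blast
  define w' where "w' = w(j := u)"
  have "\<forall>i<Suc j. cinner (w' i) (w' i) = 1" using w(1) u(1) by (auto simp: w'_def less_Suc_eq)
  moreover have "\<forall>i<Suc j. \<forall>i'<i. \<forall>l<d. cinner (B l *v w' i') (w' i) = 0"
  proof (intro allI impI)
    fix i i' l assume h: "i < Suc j" "i' < i" "l < d"
    show "cinner (B l *v w' i') (w' i) = 0"
    proof (cases "i = j")
      case True
      then have "B l *v w i' \<in> X" using h unfolding X_def by force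
      then show ?thesis using u(2) True h by (simp add: w'_def)
    next
      case False
      then show ?thesis using w(2) h by (simp add: w'_def)
    qed
  qed
  ultimately show ?case by blast
qed



lemma smult_sum: "c *s (\<Sum>i\<in>I. f i) = (\<Sum>i\<in>I. c *s f i :: complex^'n)"
  by (induct I rule: infinite_finite_induct) (simp_all add: vector_add_ldistrib)

lemma scaleR_smult: "r *\<^sub>R y = complex_of_real r *s (y :: complex^'n)"
  by (simp add: vec_eq_iff complex_eq_iff)

lemma cspan_repr:
  fixes v :: "nat \<Rightarrow> complex^'n"
  assumes inj: "inj_on v {..<k}"
  shows "cspan (v ` {..<k}) = {y. \<exists>c. y = (\<Sum>q<k. c q *s v q)}"
proof
  show "cspan (v ` {..<k}) \<subseteq> {y. \<exists>c. y = (\<Sum>q<k. c q *s v q)}"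
  proof
    fix y assume "y \<in> cspan (v ` {..<k})"
    then obtain T c where T: "finite T" "T \<subseteq> v ` {..<k}" "y = (\<Sum>t\<in>T. c t *s t)"
      unfolding cspan_def by auto
    define c' where "c' q = (if v q \<in> T then c (v q) else 0)" for q
    have "(\<Sum>q<k. c' q *s v q) = (\<Sum>t\<in>v ` {..<k}. (if t \<in> T then c t else 0) *s t)"
      by (simp add: sum.reindex[OF inj] c'_def)
    also have "\<dots> = (\<Sum>t\<in>v ` {..<k}. if t \<in> T then c t *s t else 0)"
      by (rule sum.cong) auto
    also have "\<dots> = (\<Sum>t\<in>v ` {..<k} \<inter> T. c t *s t)"
      by (simp add: sum.inter_restrict)
    also have "v ` {..<k} \<inter> T = T" using T(2) by auto
    finally have "y = (\<Sum>q<k. c' q *s v q)" using T(3) by simp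
    then show "y \<in> {y. \<exists>c. y = (\<Sum>q<k. c q *s v q)}" by (intro CollectI exI[of _ c'])
  qed
next
  show "{y. \<exists>c. y = (\<Sum>q<k. c q *s v q)} \<subseteq> cspan (v ` {..<k})"
  proof
    fix y assume "y \<in> {y. \<exists>c. y = (\<Sum>q<k. c q *s v q)}"
    then obtain c where c: "y = (\<Sum>q<k. c q *s v q)" by auto
    define c' where "c' t = c (inv_into {..<k} v t)" for t
    have "(\<Sum>t\<in>v ` {..<k}. c' t *s t) = (\<Sum>q<k. c' (v q) *s v q)"
      by (simp add: sum.reindex[OF inj])
    also have "\<dots> = y" unfolding c c'_def by (rule sum.cong) (auto simp: inv_into_f_f[OF inj])
    finally show "y \<in> cspan (v ` {..<k})" unfolding cspan_def by (intro CollectI exI[of _ "v ` {..<k}"] exI[of _ c']) auto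
  qed
qed

lemma code_from_vectors:
  fixes v :: "nat \<Rightarrow> complex^'n" and E :: "(complex^'n^'n) set" and \<epsilon> :: "complex^'n^'n \<Rightarrow> real"
  assumes k: "1 \<le> k"
    and orth: "\<And>q q'. q<k \<Longrightarrow> q'<k \<Longrightarrow> cinner (v q) (v q') = (if q = q' then 1 else 0)"
    and rel: "\<And>A q q'. A \<in> E \<Longrightarrow> q<k \<Longrightarrow> q'<k \<Longrightarrow>
        cinner (v q) (A *v v q') = (if q = q' then complex_of_real (\<epsilon> A) else 0)"
  shows "is_code E (cspan (v ` {..<k})) \<and> k \<le> cdim (cspan (v ` {..<k}))"
proof -
  have inj: "inj_on v {..<k}"
  proof (rule inj_onI)
    fix q q' assume "q \<in> {..<k}" "q' \<in> {..<k}" "v q = v q'"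
    then show "q = q'" using orth[of q q'] orth[of q' q'] by (auto split: if_splits)
  qed
  define C where "C = cspan (v ` {..<k})"
  have Cr: "C = {y. \<exists>c. y = (\<Sum>q<k. c q *s v q)}" unfolding C_def by (rule cspan_repr[OF inj])
  define P :: "complex^'n^'n" where "P = (\<chi> i j. \<Sum>q<k. v q $ i * cnj (v q $ j))"
  have Pv: "P *v x = (\<Sum>q<k. cinner (v q) x *s v q)" for x
    by (simp add: vec_eq_iff P_def matrix_vector_mult_def cinner_def sum_distrib_left sum_distrib_right
        sum.swap[of _ UNIV] algebra_simps)
  have cin_C: "cinner (\<Sum>q<k. c q *s v q) z = (\<Sum>q<k. cnj (c q) * cinner (v q) z)" for c z
    by (simp add: cinner_sum_left cinner_smult_left)
  have vPx: "cinner (v q) (P *v x) = cinner (v q) x" if "q < k" for q x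
  proof -
    have "cinner (v q) (P *v x) = (\<Sum>q'<k. cinner (v q') x * cinner (v q) (v q'))"
      by (simp add: Pv cinner_sum_right cinner_smult_right)
    also have "\<dots> = (\<Sum>q'<k. if q' = q then cinner (v q') x else 0)"
      by (rule sum.cong) (use that orth in auto)
    also have "\<dots> = cinner (v q) x" using that by simp
    finally show ?thesis .
  qed
  have isP: "is_orth_proj C P"
    unfolding is_orth_proj_def
  proof (intro allI conjI ballI)
    fix x
    show "P *v x \<in> C" unfolding Cr Pv by (intro CollectI exI[of _ "\<lambda>q. cinner (v q) x"]) (rule refl)
    fix y assume "y \<in> C"
    then obtain c where c: "y = (\<Sum>q<k. c q *s v q)" unfolding Cr by auto
    show "cinner y (x - P *v x) = 0"
      unfolding c cin_C by (simp add: cinner_diff_right vPx)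
  qed
  have Cdiff: "a - b \<in> C" if ab: "a \<in> C" "b \<in> C" for a b
  proof -
    obtain c1 where "a = (\<Sum>q<k. c1 q *s v q)" using ab(1) unfolding Cr by auto
    moreover obtain c2 where "b = (\<Sum>q<k. c2 q *s v q)" using ab(2) unfolding Cr by auto
    ultimately have "a - b = (\<Sum>q<k. (c1 q - c2 q) *s v q)"
      by (simp add: sum_subtractf vec_eq_iff algebra_simps)
    then show ?thesis unfolding Cr by (intro CollectI exI[of _ "\<lambda>q. c1 q - c2 q"])
  qed
  have uniq: "Q = P" if "is_orth_proj C Q" for Q
  proof -
    have "Q *v x = P *v x" for x
    proof -
      have Q: "Q *v x \<in> C" "\<forall>y\<in>C. cinner y (x - Q *v x) = 0" using that unfolding is_orth_proj_def by auto
      have P: "P *v x \<in> C" "\<forall>y\<in>C. cinner y (x - P *v x) = 0" using isP unfolding is_orth_proj_def by auto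
      define z where "z = Q *v x - P *v x"
      have zC: "z \<in> C" unfolding z_def by (rule Cdiff[OF Q(1) P(1)])
      have "z = (x - P *v x) - (x - Q *v x)" unfolding z_def by simp
      then have "cinner z z = cinner z (x - P *v x) - cinner z (x - Q *v x)" by (simp add: cinner_diff_right)
      also have "\<dots> = 0" using Q(2) P(2) zC by simp
      finally have "z = 0" by (rule cinner_self_eq0)
      then show ?thesis unfolding z_def by simp
    qed
    then show ?thesis by (simp add: matrix_eq)
  qed
  have OP: "orth_proj C = P" unfolding orth_proj_def
    by (rule the_equality[where P="is_orth_proj C", OF isP uniq])
  have code: "orth_proj C ** A ** orth_proj C = \<epsilon> A *\<^sub>R orth_proj C" if A: "A \<in> E" for A
  proof -
    have "((P ** A) ** P) *v x = (\<epsilon> A *\<^sub>R P) *v x" for x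
    proof -
      have "((P ** A) ** P) *v x = P *v (A *v (P *v x))" by (simp add: matrix_vector_mul_assoc matrix_mul_assoc)
      also have "A *v (P *v x) = (\<Sum>q'<k. cinner (v q') x *s (A *v v q'))"
        by (simp add: Pv mv_sum mv_smult)
      also have "P *v \<dots> = (\<Sum>q<k. (complex_of_real (\<epsilon> A) * cinner (v q) x) *s v q)"
      proof -
        have "cinner (v q) (\<Sum>q'<k. cinner (v q') x *s (A *v v q')) = complex_of_real (\<epsilon> A) * cinner (v q) x"
          if "q < k" for q
        proof -
          have "cinner (v q) (\<Sum>q'<k. cinner (v q') x *s (A *v v q'))
              = (\<Sum>q'<k. cinner (v q') x * cinner (v q) (A *v v q'))"
            by (simp add: cinner_sum_right cinner_smult_right)
          also have "\<dots> = (\<Sum>q'<k. if q' = q then cinner (v q') x * complex_of_real (\<epsilon> A) else 0)"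
            by (rule sum.cong) (use that rel[OF A] in auto)
          also have "\<dots> = complex_of_real (\<epsilon> A) * cinner (v q) x" using that by simp
          finally show ?thesis .
        qed
        then show ?thesis unfolding Pv by (intro sum.cong) auto
      qed
      also have "\<dots> = (\<epsilon> A *\<^sub>R P) *v x"
        by (simp add: mv_scaleR_mat scaleR_smult Pv smult_sum vector_smult_assoc)
      finally show ?thesis .
    qed
    then show ?thesis unfolding OP by (simp add: matrix_eq)
  qed
  have csub: "csubspace C"
    unfolding csubspace_def
  proof (intro conjI ballI allI)
    show "0 \<in> C" unfolding Cr by (intro CollectI exI[of _ "\<lambda>_. 0"]) simp
  next
    fix x y assume "x \<in> C" "y \<in> C"
    then obtain c1 c2 where "x = (\<Sum>q<k. c1 q *s v q)" "y = (\<Sum>q<k. c2 q *s v q)" unfolding Cr by blast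
    then have "x + y = (\<Sum>q<k. (c1 q + c2 q) *s v q)" by (simp add: sum.distrib vector_sadd_rdistrib)
    then show "x + y \<in> C" unfolding Cr by (intro CollectI exI[of _ "\<lambda>q. c1 q + c2 q"])
  next
    fix c x assume "x \<in> C"
    then obtain c1 where "x = (\<Sum>q<k. c1 q *s v q)" unfolding Cr by auto
    then have "c *s x = (\<Sum>q<k. (c * c1 q) *s v q)" by (simp add: smult_sum vector_smult_assoc)
    then show "c *s x \<in> C" unfolding Cr by (intro CollectI exI[of _ "\<lambda>q. c * c1 q"])
  qed
  have "is_code E C" unfolding is_code_def using csub code by blast
  moreover have "k \<le> cdim C"
  proof -
    define V where "V = v ` {..<k}"
    have fV: "finite V" unfolding V_def by simp
    have cV: "card V = k" unfolding V_def using card_image[OF inj] by simp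
    have ex: "\<exists>m. \<exists>B. finite B \<and> card B = m \<and> cspan B = C" using fV unfolding C_def V_def by blast
    obtain B where B: "finite B" "card B = cdim C" "cspan B = C"
      using LeastI_ex[OF ex] unfolding cdim_def by blast
    have cspan_sub: "cspan B \<subseteq> vec.span B"
    proof
      fix y assume "y \<in> cspan B"
      then obtain T c where T: "finite T" "T \<subseteq> B" "y = (\<Sum>t\<in>T. c t *s t)" unfolding cspan_def by auto
      have h: "c t *s t \<in> vec.span B" if "t \<in> T" for t
        using T(2) that by (blast intro: vec.span_scale vec.span_base)
      show "y \<in> vec.span B" unfolding T(3) by (rule vec.span_sum) (rule h)
    qed
    have VC: "V \<subseteq> C"
    proof
      fix y assume "y \<in> V"
      then show "y \<in> C" unfolding C_def cspan_def
        by (intro CollectI exI[of _ "{y}"] exI[of _ "\<lambda>_. 1"]) (auto simp: V_def)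
    qed
    have orthV: "cinner s t = (if s = t then 1 else 0)" if "s \<in> V" "t \<in> V" for s t
      using that orth inj unfolding V_def by (auto simp: inj_on_eq_iff)
    have indep: "vec.independent V"
      unfolding vec.independent_explicit_module
    proof (intro allI impI)
      fix T u t0 assume h: "finite T" "T \<subseteq> V" "(\<Sum>t\<in>T. u t *s t) = 0" "t0 \<in> T"
      have "0 = cinner t0 (\<Sum>t\<in>T. u t *s t)" using h(3) by simp
      also have "\<dots> = (\<Sum>t\<in>T. u t * cinner t0 t)" by (simp add: cinner_sum_right cinner_smult_right)
      also have "\<dots> = (\<Sum>t\<in>T. if t0 = t then u t else 0)"
      proof (rule sum.cong[OF refl])
        fix t assume "t \<in> T"
        then have "t \<in> V" "t0 \<in> V" using h by auto
        then show "u t * cinner t0 t = (if t0 = t then u t else 0)" using orthV by simp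
      qed
      also have "\<dots> = u t0" using h by simp
      finally show "u t0 = 0" by simp
    qed
    have "V \<subseteq> vec.span B" using VC B(3) cspan_sub by auto
    then have "card V \<le> card B" using vec.independent_span_bound[OF B(1) indep] by simp
    then show ?thesis using cV B(2) by simp
  qed
  ultimately show ?thesis unfolding C_def by simp
qed



lemma cinner_scaleR_right: "cinner x (r *\<^sub>R y) = r *\<^sub>R cinner x (y::complex^'n)"
  by (simp add: scaleR_smult cinner_smult_right scaleR_conv_of_real)

lemma mv_sum_mat: "(\<Sum>i\<in>I. M i) *v x = (\<Sum>i\<in>I. M i *v (x::complex^'n))"
  by (induct I rule: infinite_finite_induct) (simp_all add: matrix_vector_mult_add_rdistrib)

theorem proposition3:
  fixes E :: "(complex ^ 'n ^ 'n) set"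
  assumes "quantum_graph E"
  shows "\<exists>C. is_code E C \<and>
           real (cdim C) \<ge> real_of_int \<lceil>real CARD('n) / (real (dim E - 1) + 1)^2\<rceil>"
proof -
  have sE: "subspace E" and saE: "\<And>A. A \<in> E \<Longrightarrow> self_adjoint A" and IE: "mat 1 \<in> E"
    using assms unfolding quantum_graph_def by auto
  define d where "d = dim E"
  define n where "n = CARD('n)"
  have I0: "(mat 1 :: complex^'n^'n) \<noteq> 0"
  proof
    assume "(mat 1 :: complex^'n^'n) = 0"
    then have "(mat 1 :: complex^'n^'n) $ undefined $ undefined = 0" by simp
    then show False by (simp add: mat_def)
  qed
  have d1: "1 \<le> d"
  proof (rule ccontr)
    assume "\<not> 1 \<le> d"
    then have "dim E = 0" unfolding d_def by linarith
    then have "E \<subseteq> {0}" by (simp only: dim_eq_0)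
    then show False using IE I0 by auto
  qed
  obtain Bs where Bs: "Bs \<subseteq> E" "independent Bs" "E \<subseteq> span Bs" "card Bs = d"
    using basis_exists[of E] unfolding d_def by blast
  have fBs: "finite Bs" using Bs(4) d1 card_ge_0_finite by force
  obtain B where B: "bij_betw B {0..<card Bs} Bs" using ex_bij_betw_nat_finite[OF fBs] by blast
  have Bimg: "B ` {..<d} = Bs" and Binj: "inj_on B {..<d}"
    using B Bs(4) by (auto simp: bij_betw_def atLeast0LessThan)
  have BE: "B l \<in> E" if "l < d" for l using Bimg Bs(1) that by auto
  have Bsa: "self_adjoint (B l)" if "l < d" for l using saE BE that by auto
  have Espan: "E \<subseteq> span (B ` {..<d})" using Bs(3) Bimg by simp
  define k where "k = nat \<lceil>real n / (real d)^2\<rceil>"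
  have npos: "0 < n" unfolding n_def by simp
  have dpos: "0 < real d" using d1 by simp
  have q0: "0 < real n / (real d)^2" using npos dpos by simp
  have ceil: "real_of_int \<lceil>real n / (real d)^2\<rceil> - 1 < real n / (real d)^2"
    "real n / (real d)^2 \<le> real_of_int \<lceil>real n / (real d)^2\<rceil>"
    using ceiling_correct by auto
  have cpos: "0 < \<lceil>real n / (real d)^2\<rceil>" using ceil(2) q0 by linarith
  have kreal: "real k = real_of_int \<lceil>real n / (real d)^2\<rceil>" unfolding k_def using cpos by simp
  have k1: "1 \<le> k" using cpos unfolding k_def by linarith
  have "real (k - 1) < real n / (real d)^2" using kreal ceil(1) k1 by (simp add: of_nat_diff)
  then have "real (k - 1) * (real d)^2 < real n" using dpos by (simp add: field_simps)
  then have kd: "(k - 1) * d * d < n" by (metis of_nat_less_iff of_nat_mult power2_eq_square mult.assoc)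
  define r where "r = (k - 1) * d + 1"
  have "d * r < n + d" unfolding r_def using kd by (simp add: algebra_simps)
  then obtain w where w1: "\<forall>i<r. cinner (w i) (w i) = 1"
    and w0: "\<forall>i<r. \<forall>i'<i. \<forall>l<d. cinner (B l *v w i') (w i) = 0"
    using greedy[of d r B] unfolding n_def by blast
  have offB: "cinner (w i) (B l *v w j) = 0" if "i < r" "j < r" "i \<noteq> j" "l < d" for i j l
  proof (cases "j < i")
    case True
    have "cinner (w j) (B l *v w i) = cinner (B l *v w j) (w i)" by (rule sa_move[OF Bsa[OF that(4)]])
    also have "\<dots> = 0" using w0 that True by blast
    finally have "cinner (w j) (B l *v w i) = 0" .
    then show ?thesis using sa_cnj[OF Bsa[OF that(4)], of "w j" "w i"] by (metis complex_cnj_zero)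
  next
    case False
    then have "i < j" using that by simp
    have "cinner (w i) (B l *v w j) = cinner (B l *v w i) (w j)" by (rule sa_move[OF Bsa[OF that(4)]])
    also have "\<dots> = 0" using w0 that \<open>i < j\<close> by blast
    finally show ?thesis .
  qed
  have off: "cinner (w i) (A *v w j) = 0" if "A \<in> E" "i < r" "j < r" "i \<noteq> j" for A i j
  proof -
    have "A \<in> span (B ` {..<d})" using Espan that(1) by auto
    then show ?thesis
      by (rule span_lin_zero[of "\<lambda>A. cinner (w i) (A *v w j)", rotated 3])
        (auto simp: matrix_vector_mult_add_rdistrib cinner_add_right mv_scaleR_mat cinner_scaleR_right offB that)
  qed
  define a where "a j l = Re (cinner (w j) (B l *v w j))" for j l
  have aeq: "cinner (w j) (B l *v w j) = complex_of_real (a j l)" if "l < d" for j l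
    unfolding a_def by (rule sa_real[OF Bsa[OF that]])
  obtain u where u: "mat 1 = (\<Sum>b\<in>B ` {..<d}. u b *\<^sub>R b)"
    using IE Espan span_finite[of "B ` {..<d}"] by auto
  define \<gamma> where "\<gamma> l = u (B l)" for l
  have Isum: "mat 1 = (\<Sum>l<d. \<gamma> l *\<^sub>R B l)"
    using u by (simp add: sum.reindex[OF Binj] \<gamma>_def)
  have gam: "(\<Sum>l<d. \<gamma> l * a j l) = 1" if "j < r" for j
  proof -
    have "1 = cinner (w j) (mat 1 *v w j)" using w1 that by simp
    also have "\<dots> = (\<Sum>l<d. \<gamma> l *\<^sub>R cinner (w j) (B l *v w j))"
      by (subst Isum) (simp add: mv_sum_mat mv_scaleR_mat cinner_sum_right cinner_scaleR_right)
    also have "\<dots> = complex_of_real (\<Sum>l<d. \<gamma> l * a j l)"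
      by (simp add: aeq scaleR_conv_of_real)
    finally show ?thesis by (metis of_real_1 of_real_eq_iff)
  qed
  obtain g where g: "bij_betw g {0..<card (UNIV::'n set)} (UNIV::'n set)"
    using ex_bij_betw_nat_finite[of "UNIV::'n set"] by auto
  have "d * (k - 1) \<le> n"
  proof -
    have "d * (k - 1) \<le> (k - 1) * d * d" using d1 by (simp add: mult.commute)
    then show ?thesis using kd by linarith
  qed
  then have embinj: "inj_on g {..<d * (k - 1)}"
    using g unfolding bij_betw_def n_def by (auto simp: atLeast0LessThan intro: inj_on_subset)
  obtain p \<nu> where pv: "\<forall>j<r. p j < k \<and> 0 \<le> \<nu> j"
    and pv1: "\<forall>q<k. (\<Sum>j\<in>{j\<in>{..<r}. p j = q}. \<nu> j) = 1"
    and pv2: "\<forall>q<k. \<forall>l<d. (\<Sum>j\<in>{j\<in>{..<r}. p j = q}. \<nu> j * a j l) = (\<Sum>j\<in>{j\<in>{..<r}. p j = 0}. \<nu> j * a j l)"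
    using tverberg[where a=a and \<gamma>=\<gamma> and emb=g and k=k and r=r and d=d, OF k1 r_def gam embinj] by blast
  define G where "G q = {j\<in>{..<r}. p j = q}" for q
  define v where "v q = (\<Sum>j\<in>G q. complex_of_real (sqrt (\<nu> j)) *s w j)" for q
  define H where "H q A = (\<Sum>j\<in>G q. complex_of_real (\<nu> j) * cinner (w j) (A *v w j))" for q A
  have vv: "cinner (v q) (A *v v q') = (if q = q' then H q A else 0)" if A: "A \<in> E" for A q q'
  proof -
    have "cinner (v q) (A *v v q') = (\<Sum>j\<in>G q. complex_of_real (sqrt (\<nu> j)) * cinner (w j) (A *v v q'))"
      unfolding v_def[of q] by (simp add: cinner_sum_left cinner_smult_left)
    also have "\<dots> = (\<Sum>j\<in>G q. \<Sum>j'\<in>G q'.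
        complex_of_real (sqrt (\<nu> j)) * (complex_of_real (sqrt (\<nu> j')) * cinner (w j) (A *v w j')))"
      unfolding v_def[of q'] by (simp add: cinner_sum_right cinner_smult_right mv_sum mv_smult sum_distrib_left)
    also have "\<dots> = (\<Sum>j\<in>G q. \<Sum>j'\<in>G q'. if j = j' then complex_of_real (\<nu> j) * cinner (w j) (A *v w j) else 0)"
    proof (intro sum.cong refl)
      fix j j' assume "j \<in> G q" "j' \<in> G q'"
      then have "j < r" "j' < r" "0 \<le> \<nu> j" using pv by (auto simp: G_def)
      then show "complex_of_real (sqrt (\<nu> j)) * (complex_of_real (sqrt (\<nu> j')) * cinner (w j) (A *v w j'))
          = (if j = j' then complex_of_real (\<nu> j) * cinner (w j) (A *v w j) else 0)"
        using off[OF A, of j j'] by (auto simp flip: of_real_mult)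
    qed
    also have "\<dots> = (\<Sum>j\<in>G q. if j \<in> G q' then complex_of_real (\<nu> j) * cinner (w j) (A *v w j) else 0)"
      by (rule sum.cong) (auto simp: G_def)
    also have "\<dots> = (if q = q' then H q A else 0)"
      unfolding H_def by (auto simp: G_def intro: sum.neutral)
    finally show ?thesis .
  qed
  have HB: "H q (B l) = H 0 (B l)" if "q < k" "l < d" for q l
  proof -
    have e: "H q (B l) = complex_of_real (\<Sum>j\<in>G q. \<nu> j * a j l)" for q
      unfolding H_def by (simp add: aeq[OF that(2)])
    have eq: "(\<Sum>j\<in>G q. \<nu> j * a j l) = (\<Sum>j\<in>G 0. \<nu> j * a j l)"
      using pv2 that unfolding G_def by blast
    show ?thesis by (simp only: e eq)
  qed
  have Hadd: "H q (A + A') = H q A + H q A'" for q A A'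
    unfolding H_def by (simp add: matrix_vector_mult_add_rdistrib cinner_add_right distrib_left sum.distrib)
  have Hsc: "H q (c *\<^sub>R A) = c *\<^sub>R H q A" for q c A
    unfolding H_def by (simp add: mv_scaleR_mat cinner_scaleR_right scaleR_sum_right mult_scaleR_right)
  have HE: "H q A = H 0 A" if "A \<in> E" "q < k" for A q
  proof -
    have "A \<in> span (B ` {..<d})" using Espan that(1) by auto
    then have "H q A - H 0 A = 0"
      by (rule span_lin_zero[of "\<lambda>A. H q A - H 0 A", rotated 3])
        (auto simp: Hadd Hsc HB that scaleR_right_diff_distrib)
    then show ?thesis by simp
  qed
  have Hreal: "H 0 A = complex_of_real (Re (H 0 A))" if "A \<in> E" for A
  proof -
    have "H 0 A = complex_of_real (\<Sum>j\<in>G 0. \<nu> j * Re (cinner (w j) (A *v w j)))"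
      unfolding H_def by (simp, rule sum.cong, simp, subst sa_real[OF saE[OF that]], simp)
    then show ?thesis by simp
  qed
  have H1: "H 0 (mat 1) = 1"
  proof -
    have e: "H 0 (mat 1) = complex_of_real (\<Sum>j\<in>G 0. \<nu> j)"
      unfolding H_def using w1 by (simp add: G_def)
    have eq: "(\<Sum>j\<in>G 0. \<nu> j) = 1" using pv1 k1 unfolding G_def by auto
    show ?thesis by (simp only: e eq of_real_1)
  qed
  define \<epsilon> where "\<epsilon> A = Re (H 0 A)" for A
  have orth: "cinner (v q) (v q') = (if q = q' then 1 else 0)" if "q < k" "q' < k" for q q'
    using vv[OF IE, of q q'] HE[OF IE that(1)] H1 by (cases "q = q'") simp_all
  have rel: "cinner (v q) (A *v v q') = (if q = q' then complex_of_real (\<epsilon> A) else 0)"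
    if "A \<in> E" "q < k" "q' < k" for A q q'
    using vv[OF that(1), of q q'] HE[OF that(1,2)] Hreal[OF that(1)] unfolding \<epsilon>_def
    by (cases "q = q'") simp_all
  have res: "is_code E (cspan (v ` {..<k})) \<and> k \<le> cdim (cspan (v ` {..<k}))"
    by (rule code_from_vectors[OF k1 orth rel])
  have "real (dim E - 1) + 1 = real d" using d1 unfolding d_def by simp
  then have "real_of_int \<lceil>real CARD('n) / (real (dim E - 1) + 1)^2\<rceil> = real k"
    using kreal unfolding n_def by simp
  then show ?thesis using res by auto
qed


end
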